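(* Let $C_{TS}>0$ be a fixed absolute constant and, for a problem instance, let $N_{TS}=C_{TS}\,\varepsilon_{TS}^{-2}\log(\delta_{TS}^{-1})$ where $\varepsilon_{TS}=\min_{i,j\in[K]}\mathbb E[(\mu_i-\mu_j)_+]$ and $\delta_{TS}=\min_{i\in[K]}\Pr[A^*=i]$. Let $\mathcal C$ be a fixed finite collection of priors on $[0,1]$ such that every problem instance (with any number of arms) whose priors all belong to $\mathcal C$ satisfies pairwise non-dominance. Then there is a constant $c_{\mathcal C}$ depending only on $\mathcal C$ (and $C_{TS}$) such that for every $K$ and every $K$-armed problem instance with all priors $\mathcal P_i\in\mathcal C$, $N_{TS}\leq c_{\mathcal C}\,K$.
   Context: A problem instance consists of $K$ arms with mean rewards $\mu_1,\dots,\mu_K\in[0,1]$ drawn independently, $\mu_i\sim\mathcal P_i$. $A^*=\min(\arg\max_j\mu_j)$. $(x)_+=\max(x,0)$. Pairwise non-dominance: for all arms $i\neq j$, $\Pr[\mu_j<\mathbb E[\mu_i]]>0$. *)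

theory Defs
  imports "HOL-Probability.Probability"
begin

definition is_prior :: "real measure \<Rightarrow> bool" where
  "is_prior P \<longleftrightarrow> prob_space P \<and> sets P = sets borel \<and> emeasure P {0..1} = 1"

definition inst_law :: "nat \<Rightarrow> (nat \<Rightarrow> real measure) \<Rightarrow> (nat \<Rightarrow> real) measure" where
  "inst_law K Pr = PiM {..<K} Pr"

definition A_star :: "nat \<Rightarrow> (nat \<Rightarrow> real) \<Rightarrow> nat" where
  "A_star K mu = (LEAST i. i < K \<and> (\<forall>j<K. mu j \<le> mu i))"

definition pairwise_nondom :: "nat \<Rightarrow> (nat \<Rightarrow> real measure) \<Rightarrow> bool" where
  "pairwise_nondom K Pr \<longleftrightarrow>
     (\<forall>i<K. \<forall>j<K. i \<noteq> j \<longrightarrow>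
        measure (inst_law K Pr)
          {mu \<in> space (inst_law K Pr). mu j < integral\<^sup>L (inst_law K Pr) (\<lambda>mu. mu i)} > 0)"

definition eps_TS :: "nat \<Rightarrow> (nat \<Rightarrow> real measure) \<Rightarrow> real" where
  "eps_TS K Pr = Min {integral\<^sup>L (inst_law K Pr) (\<lambda>mu. max (mu i - mu j) 0) | i j.
                        i < K \<and> j < K \<and> i \<noteq> j}"

definition delta_TS :: "nat \<Rightarrow> (nat \<Rightarrow> real measure) \<Rightarrow> real" where
  "delta_TS K Pr = Min {measure (inst_law K Pr) {mu \<in> space (inst_law K Pr). A_star K mu = i} | i.
                          i < K}"

definition N_TS :: "real \<Rightarrow> nat \<Rightarrow> (nat \<Rightarrow> real measure) \<Rightarrow> real" where
  "N_TS C_TS K Pr = C_TS * (1 / (eps_TS K Pr)\<^sup>2) * ln (1 / delta_TS K Pr)"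

end

theory Submission
  imports Defs
begin

lemma prior_basic:
  assumes "is_prior P"
  shows "prob_space P" "space P = UNIV" "sets P = sets borel"
    "AE x in P. x \<in> {0..1}" "integrable P (\<lambda>x. x)"
proof -
  show ps: "prob_space P" and sP: "sets P = sets borel" using assms by (auto simp: is_prior_def)
  show sp: "space P = UNIV" using sets_eq_imp_space_eq[OF sP] by simp
  interpret prob_space P by fact
  have "emeasure P {0..1} = 1" using assms by (auto simp: is_prior_def)
  then have "prob {0..1} = 1" by (simp add: emeasure_eq_measure)
  moreover have "{0..1::real} \<in> events" using sP by simp
  ultimately show ae: "AE x in P. x \<in> {0..1}" using AE_prob_1 by blast
  have m: "(\<lambda>x::real. x) \<in> borel_measurable P" by (rule measurable_ident_sets[OF sP])
  show "integrable P (\<lambda>x. x)"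
    by (rule Bochner_Integration.integrable_bound[of P "\<lambda>_. 1::real"]) (use m ae in auto)
qed

definition mean :: "real measure \<Rightarrow> real" where "mean P = integral\<^sup>L P (\<lambda>x. x)"

lemma prior_mean_pos:
  assumes "is_prior P"
  shows "measure P {mean P..} > 0"
proof (rule ccontr)
  note pb = prior_basic[OF assms]
  interpret prob_space P by (fact pb)
  assume "\<not> measure P {mean P..} > 0"
  then have "measure P {mean P..} = 0" using measure_nonneg[of P] by (metis less_eq_real_def)
  then have "emeasure P {mean P..} = 0" by (simp add: emeasure_eq_measure)
  then have ae1: "AE x in P. x < mean P"
    by (subst AE_iff_measurable[of "{mean P..}"]) (auto simp: pb)
  have int: "integrable P (\<lambda>x. mean P - x)" using pb by auto
  have "integral\<^sup>L P (\<lambda>x. mean P - x) = 0"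
  proof -
    have "prob UNIV = 1" using prob_space pb(2) by simp
    then show ?thesis using pb by (simp add: Bochner_Integration.integral_diff mean_def)
  qed
  moreover have "AE x in P. 0 \<le> mean P - x" using ae1 by eventually_elim auto
  ultimately have "AE x in P. mean P - x = 0"
    using integral_nonneg_eq_0_iff_AE[OF int] by simp
  with ae1 have "AE x in P. False" by eventually_elim auto
  then show False by simp
qed

lemma eta_exists:
  assumes "is_prior Q" "measure Q {..<m} > 0"
  shows "\<exists>\<eta>>0. measure Q {..<m - \<eta>} > 0"
proof (rule ccontr)
  note pb = prior_basic[OF assms(1)]
  interpret prob_space Q by (fact pb)
  assume "\<not> ?thesis"
  then have z: "measure Q {..<m - 1 / Suc n} = 0" for n
    using measure_nonneg[of Q] by (metis less_eq_real_def of_nat_0_less_iff zero_less_Suc divide_pos_pos zero_less_one)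
  have "emeasure Q (\<Union>n. {..<m - 1 / Suc n}) = 0"
    by (rule emeasure_UN_eq_0) (use z pb in \<open>auto simp: emeasure_eq_measure\<close>)
  moreover have "(\<Union>n. {..<m - 1 / Suc n}) = {..<m}"
  proof safe
    fix y assume "y < m"
    then obtain n where "inverse (Suc n) < m - y" using reals_Archimedean[of "m - y"] by auto
    then have "y < m - 1 / Suc n" by (simp add: inverse_eq_divide)
    then show "y \<in> (\<Union>n. {..<m - 1 / Suc n})" by blast
  next
    fix x n assume "x < m - 1 / real (Suc n)"
    moreover have "1 / real (Suc n) > 0" by simp
    ultimately show "x < m" by linarith
  qed
  ultimately show False using assms(2) by (simp add: emeasure_eq_measure)
qed


lemma pim_box:
  assumes fin: "finite I" and ps: "\<And>i. i \<in> I \<Longrightarrow> prob_space (M i)"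
    and A: "\<And>i. i \<in> I \<Longrightarrow> A i \<in> sets (M i)"
  shows "measure (PiM I M) (PiE I A) = (\<Prod>i\<in>I. measure (M i) (A i))"
proof -
  let ?M = "\<lambda>i. if i \<in> I then M i else count_space {undefined}"
  interpret M': prob_space "?M i" for i
    using ps by (cases "i \<in> I") (auto intro!: prob_spaceI)
  interpret product_prob_space ?M I
    by unfold_locales
  have eq: "(\<Pi>\<^sub>M i\<in>I. ?M i) = (\<Pi>\<^sub>M i\<in>I. M i)"
    by (intro PiM_cong) auto
  interpret PP: prob_space "PiM I M" using ps by (rule prob_space_PiM)
  have "emeasure (PiM I ?M) (PiE I A) = (\<Prod>i\<in>I. emeasure (?M i) (A i))"
    using A by (intro emeasure_PiM fin) auto
  then have "emeasure (PiM I M) (PiE I A) = (\<Prod>i\<in>I. emeasure (M i) (A i))"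
    using eq by simp
  moreover have "emeasure (M i) (A i) = ennreal (measure (M i) (A i))" if "i \<in> I" for i
    using ps[OF that] by (simp add: prob_space_def finite_measure.emeasure_eq_measure)
  ultimately have "ennreal (measure (PiM I M) (PiE I A)) = ennreal (\<Prod>i\<in>I. measure (M i) (A i))"
    by (simp add: PP.emeasure_eq_measure prod_ennreal measure_nonneg)
  then show ?thesis by (simp add: measure_nonneg prod_nonneg)
qed

lemma pim_comp_measure:
  assumes ps: "\<And>i. i \<in> I \<Longrightarrow> prob_space (M i)" and i: "i \<in> I" and A: "A \<in> sets (M i)"
  shows "measure (PiM I M) {mu \<in> space (PiM I M). mu i \<in> A} = measure (M i) A"
proof -
  have "measure (M i) A = measure (distr (PiM I M) (M i) (\<lambda>\<omega>. \<omega> i)) A"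
    using distr_PiM_component[of I M i, OF ps i] by simp
  also have "\<dots> = measure (PiM I M) ((\<lambda>\<omega>. \<omega> i) -` A \<inter> space (PiM I M))"
    using A i by (intro measure_distr measurable_component_singleton) auto
  finally show ?thesis by (simp add: Int_def conj_commute)
qed

lemma pim_comp_integral:
  fixes f :: "real \<Rightarrow> real"
  assumes ps: "\<And>i. i \<in> I \<Longrightarrow> prob_space (M i)" and i: "i \<in> I" and f: "f \<in> borel_measurable (M i)"
  shows "integral\<^sup>L (PiM I M) (\<lambda>mu. f (mu i)) = integral\<^sup>L (M i) f"
proof -
  have "integral\<^sup>L (M i) f = integral\<^sup>L (distr (PiM I M) (M i) (\<lambda>\<omega>. \<omega> i)) f"
    using distr_PiM_component[of I M i, OF ps i] by simp
  also have "\<dots> = integral\<^sup>L (PiM I M) (\<lambda>mu. f (mu i))"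
    using i f by (intro integral_distr measurable_component_singleton) auto
  finally show ?thesis by simp
qed

lemma prod_two:
  fixes a b :: real
  assumes "finite I" "i \<in> I" "j \<in> I" "i \<noteq> j"
  shows "(\<Prod>k\<in>I. if k = i then a else if k = j then b else 1) = a * b"
proof -
  have "(\<Prod>k\<in>I. if k = i then a else if k = j then b else 1)
      = a * (\<Prod>k\<in>I-{i}. if k = i then a else if k = j then b else 1)"
    using assms by (subst prod.remove[of I i]) auto
  also have "(\<Prod>k\<in>I-{i}. if k = i then a else if k = j then b else 1)
      = b * (\<Prod>k\<in>I-{i}-{j}. if k = i then a else if k = j then b else 1)"
    using assms by (subst prod.remove[of "I-{i}" j]) auto
  also have "(\<Prod>k\<in>I-{i}-{j}. if k = i then a else if k = j then b else 1) = 1"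
    by (intro prod.neutral) auto
  finally show ?thesis by simp
qed

lemma pim_prior_meas:
  assumes "\<And>k. k \<in> I \<Longrightarrow> is_prior (M k)" "i \<in> I"
  shows "(\<lambda>mu. mu i) \<in> borel_measurable (PiM I M)"
proof -
  have "(\<lambda>mu. mu i) \<in> measurable (PiM I M) (M i)"
    using assms by (intro measurable_component_singleton) auto
  also have "measurable (PiM I M) (M i) = measurable (PiM I M) borel"
    by (rule measurable_cong_sets[OF refl prior_basic(3)[OF assms(1)[OF assms(2)]]])
  finally show ?thesis .
qed

lemma L_eps:
  assumes fin: "finite I" and i: "i \<in> I" and j: "j \<in> I" and ij: "i \<noteq> j"
    and pr: "\<And>k. k \<in> I \<Longrightarrow> is_prior (M k)" and eta: "\<eta> > 0"
  shows "integral\<^sup>L (PiM I M) (\<lambda>mu. max (mu i - mu j) 0)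
          \<ge> \<eta> * (measure (M i) {t..} * measure (M j) {..<t - \<eta>})"
proof -
  have ps: "\<And>k. k \<in> I \<Longrightarrow> prob_space (M k)" using pr prior_basic by blast
  interpret P: prob_space "PiM I M" using ps by (rule prob_space_PiM)
  define A where "A = (\<lambda>k. if k = i then {t..} else if k = j then {..<t - \<eta>} else (UNIV::real set))"
  have As: "A k \<in> sets (M k)" if "k \<in> I" for k
    using prior_basic(3)[OF pr[OF that]] by (auto simp: A_def)
  have sp: "space (M k) = UNIV" if "k \<in> I" for k using prior_basic(2)[OF pr[OF that]] .
  have m1: "measure (M k) UNIV = 1" if "k \<in> I" for k
    using prob_space.prob_space[OF ps[OF that]] sp[OF that] by simp
  have "measure (PiM I M) (PiE I A) = (\<Prod>k\<in>I. measure (M k) (A k))"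
    by (rule pim_box[OF fin ps As])
  also have "\<dots> = (\<Prod>k\<in>I. if k = i then measure (M i) {t..} else if k = j then measure (M j) {..<t - \<eta>} else 1)"
    using m1 by (intro prod.cong) (auto simp: A_def)
  also have "\<dots> = measure (M i) {t..} * measure (M j) {..<t - \<eta>}"
    by (rule prod_two[OF fin i j ij])
  finally have mE: "measure (PiM I M) (PiE I A) = measure (M i) {t..} * measure (M j) {..<t - \<eta>}" .
  have Es: "PiE I A \<in> sets (PiM I M)" using As by (intro sets_PiM_I_finite fin) auto
  have mi[measurable]: "(\<lambda>mu. mu i) \<in> borel_measurable (PiM I M)" by (rule pim_prior_meas[OF pr i])
  have mj[measurable]: "(\<lambda>mu. mu j) \<in> borel_measurable (PiM I M)" by (rule pim_prior_meas[OF pr j])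
  have aei: "AE mu in PiM I M. mu i \<in> {0..1}"
    using AE_PiM_component[of I M i, OF ps i prior_basic(4)[OF pr[OF i]]] .
  have aej: "AE mu in PiM I M. mu j \<in> {0..1}"
    using AE_PiM_component[of I M j, OF ps j prior_basic(4)[OF pr[OF j]]] .
  have int1: "integrable (PiM I M) (\<lambda>mu. max (mu i - mu j) 0)"
  proof (rule Bochner_Integration.integrable_bound[where M="PiM I M" and f="\<lambda>_. 1::real" and g="\<lambda>mu. max (mu i - mu j) 0"])
    show "AE x in PiM I M. norm (max (x i - x j) 0) \<le> norm (1::real)"
      using aei aej by eventually_elim auto
    show "integrable (PiM I M) (\<lambda>_. 1::real)" by simp
    show "(\<lambda>mu. max (mu i - mu j) 0) \<in> borel_measurable (PiM I M)" by measurable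
  qed
  have int2: "integrable (PiM I M) (\<lambda>mu. \<eta> * indicator (PiE I A) mu)"
    using Es by (intro integrable_mult_right integrable_real_indicator) (auto simp: less_top[symmetric])
  have eqI: "integral\<^sup>L (PiM I M) (\<lambda>mu. \<eta> * indicator (PiE I A) mu) = \<eta> * measure (PiM I M) (PiE I A)"
  proof -
    have sub: "PiE I A \<inter> space (PiM I M) = PiE I A" using sets.sets_into_space[OF Es] by auto
    show ?thesis by (simp add: sub)
  qed
  have le: "integral\<^sup>L (PiM I M) (\<lambda>mu. \<eta> * indicator (PiE I A) mu)
      \<le> integral\<^sup>L (PiM I M) (\<lambda>mu. max (mu i - mu j) 0)"
  proof (rule integral_mono[OF int2 int1])
    fix mu assume "mu \<in> space (PiM I M)"
    show "\<eta> * indicator (PiE I A) mu \<le> max (mu i - mu j) 0"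
    proof (cases "mu \<in> PiE I A")
      case True
      then have "mu i \<in> A i" "mu j \<in> A j" using i j by (auto intro: PiE_mem)
      then have "mu i \<ge> t" "mu j < t - \<eta>" using ij by (auto simp: A_def)
      then show ?thesis using True by auto
    qed auto
  qed
  from le show ?thesis unfolding eqI mE .
qed


lemma A_star_iff:
  assumes i: "i < K"
  shows "A_star K mu = i \<longleftrightarrow> (\<forall>j<K. mu j \<le> mu i) \<and> (\<forall>j<i. mu j < mu i)"
proof
  assume H: "(\<forall>j<K. mu j \<le> mu i) \<and> (\<forall>j<i. mu j < mu i)"
  show "A_star K mu = i"
    unfolding A_star_def
  proof (rule Least_equality)
    show "i < K \<and> (\<forall>j<K. mu j \<le> mu i)" using H i by auto
    fix k assume k: "k < K \<and> (\<forall>j<K. mu j \<le> mu k)"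
    show "i \<le> k"
    proof (rule ccontr)
      assume "\<not> i \<le> k"
      then have "mu k < mu i" using H by auto
      moreover have "mu i \<le> mu k" using k i by auto
      ultimately show False by simp
    qed
  qed
next
  assume A: "A_star K mu = i"
  have "finite (mu ` {..<K})" "mu ` {..<K} \<noteq> {}" using i by auto
  then have "Max (mu ` {..<K}) \<in> mu ` {..<K}" by (rule Max_in)
  then obtain m where m: "m < K" "mu m = Max (mu ` {..<K})" by auto
  have ex: "m < K \<and> (\<forall>j<K. mu j \<le> mu m)" using m by auto
  have Pi: "i < K \<and> (\<forall>j<K. mu j \<le> mu i)"
    using LeastI[of "\<lambda>k. k < K \<and> (\<forall>j<K. mu j \<le> mu k)", OF ex] A by (simp add: A_star_def)
  have "mu j < mu i" if j: "j < i" for j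
  proof -
    have "\<not> (j < K \<and> (\<forall>j'<K. mu j' \<le> mu j))"
      using not_less_Least[of j "\<lambda>k. k < K \<and> (\<forall>j<K. mu j \<le> mu k)"] j A by (simp add: A_star_def)
    then obtain j' where "j' < K" "mu j' > mu j" using j i by auto
    with Pi show ?thesis by force
  qed
  with Pi show "(\<forall>j<K. mu j \<le> mu i) \<and> (\<forall>j<i. mu j < mu i)" by auto
qed

lemma L_delta:
  assumes fin: "finite I" and i: "i \<in> I"
    and pr: "\<And>k. k \<in> I \<Longrightarrow> is_prior (M k)" and q: "0 \<le> q"
    and qk: "\<And>k. k \<in> I \<Longrightarrow> k \<noteq> i \<Longrightarrow> q \<le> measure (M k) {..<t}"
    and qi: "q \<le> measure (M i) {t..}"
  shows "measure (PiM I M) (PiE I (\<lambda>k. if k = i then {t..} else {..<t})) \<ge> q ^ card I"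
proof -
  have ps: "\<And>k. k \<in> I \<Longrightarrow> prob_space (M k)" using pr prior_basic by blast
  have "measure (PiM I M) (PiE I (\<lambda>k. if k = i then {t..} else {..<t}))
      = (\<Prod>k\<in>I. measure (M k) (if k = i then {t..} else {..<t}))"
    using prior_basic(3)[OF pr] by (intro pim_box[OF fin ps]) auto
  also have "\<dots> \<ge> (\<Prod>k\<in>I. q)"
    using qk qi q by (intro prod_mono) auto
  finally show ?thesis by simp
qed


theorem corollary3p3:
  fixes C_TS :: real and \<C> :: "real measure set"
  assumes "C_TS > 0"
    and "finite \<C>"
    and "\<forall>P\<in>\<C>. is_prior P"
    and "\<forall>(K::nat) (Pr::nat \<Rightarrow> real measure). (\<forall>i<K. Pr i \<in> \<C>) \<longrightarrow> pairwise_nondom K Pr"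
  shows "\<exists>c::real. \<forall>(K::nat) (Pr::nat \<Rightarrow> real measure).
           2 \<le> K \<longrightarrow> (\<forall>i<K. Pr i \<in> \<C>) \<longrightarrow> N_TS C_TS K Pr \<le> c * real K"
proof (cases "\<C> = {}")
  case True
  then show ?thesis by (intro exI[of _ 0]) force
next
  case Cne: False
  note CTS = assms(1) and finC = assms(2)
  have prC: "is_prior P" if "P \<in> \<C>" for P using assms(3) that by blast
  have nd: "measure Q {..<mean P} > 0" if P: "P \<in> \<C>" and Q: "Q \<in> \<C>" for P Q
  proof -
    define Pr2 where "Pr2 = (\<lambda>n::nat. if n = 0 then P else Q)"
    have "\<forall>i<2. Pr2 i \<in> \<C>" using P Q by (auto simp: Pr2_def)
    then have "pairwise_nondom 2 Pr2" using assms(4) by blast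
    then have H0: "\<forall>i<(2::nat). \<forall>j<2. i \<noteq> j \<longrightarrow> measure (PiM {..<2} Pr2) {mu \<in> space (PiM {..<2} Pr2).
                    mu j < integral\<^sup>L (PiM {..<2} Pr2) (\<lambda>mu. mu i)} > 0"
      unfolding pairwise_nondom_def inst_law_def .
    have H: "measure (PiM {..<2} Pr2) {mu \<in> space (PiM {..<2} Pr2).
                    mu 1 < integral\<^sup>L (PiM {..<2} Pr2) (\<lambda>mu. mu 0)} > 0"
      by (rule H0[rule_format]) simp_all
    have ps: "\<And>i. i \<in> {..<2::nat} \<Longrightarrow> prob_space (Pr2 i)"
      using prior_basic(1)[OF prC[OF P]] prior_basic(1)[OF prC[OF Q]] by (auto simp: Pr2_def)
    have "integral\<^sup>L (PiM {..<2} Pr2) (\<lambda>mu. mu 0) = integral\<^sup>L (Pr2 0) (\<lambda>x. x)"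
      using prior_basic(3)[OF prC[OF P]]
      by (intro pim_comp_integral[of _ Pr2 0 "\<lambda>x. x", OF ps]) (auto simp: Pr2_def intro: measurable_ident_sets)
    then have e: "integral\<^sup>L (PiM {..<2} Pr2) (\<lambda>mu. mu 0) = mean P" by (simp add: Pr2_def mean_def)
    have "measure (PiM {..<2} Pr2) {mu \<in> space (PiM {..<2} Pr2). mu 1 \<in> {..<mean P}} = measure (Pr2 1) {..<mean P}"
      using prior_basic(3)[OF prC[OF Q]]
      by (intro pim_comp_measure[OF ps]) (auto simp: Pr2_def)
    then show ?thesis using H e by (simp add: Pr2_def)
  qed
  have aP: "measure P {mean P..} > 0" if "P \<in> \<C>" for P using prior_mean_pos[OF prC[OF that]] .
  have "\<exists>e>0. measure Q {..<mean P - e} > 0" if "P \<in> \<C>" "Q \<in> \<C>" for P Q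
    using eta_exists[OF prC nd] that by blast
  then obtain \<eta> where eta: "\<And>P Q. P \<in> \<C> \<Longrightarrow> Q \<in> \<C> \<Longrightarrow> \<eta> P Q > 0 \<and> measure Q {..<mean P - \<eta> P Q} > 0"
    by metis
  define S1 where "S1 = (\<lambda>P. measure P {mean P..}) ` \<C> \<union> (\<lambda>(P,Q). measure Q {..<mean P}) ` (\<C> \<times> \<C>)"
  define q where "q = Min S1"
  have S1f: "finite S1" "S1 \<noteq> {}" using finC Cne by (auto simp: S1_def)
  have qpos: "q > 0" unfolding q_def using S1f aP nd by (subst Min_gr_iff) (auto simp: S1_def)
  obtain P0 where P0: "P0 \<in> \<C>" using Cne by blast
  have "q \<le> measure P0 {mean P0..}" unfolding q_def using S1f P0 by (intro Min_le) (auto simp: S1_def)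
  also have "\<dots> \<le> 1" using prior_basic(1)[OF prC[OF P0]] by (simp add: prob_space.prob_le_1)
  finally have q1: "q \<le> 1" .
  have qa: "q \<le> measure P {mean P..}" if "P \<in> \<C>" for P
    unfolding q_def using S1f that by (intro Min_le) (auto simp: S1_def)
  have qb: "q \<le> measure Q {..<mean P}" if "P \<in> \<C>" "Q \<in> \<C>" for P Q
    unfolding q_def using S1f that by (intro Min_le) (auto simp: S1_def)
  define S2 where "S2 = (\<lambda>(P,Q). \<eta> P Q * (measure P {mean P..} * measure Q {..<mean P - \<eta> P Q})) ` (\<C> \<times> \<C>)"
  define e0 where "e0 = Min S2"
  have S2f: "finite S2" "S2 \<noteq> {}" using finC Cne by (auto simp: S2_def)
  have e0pos: "e0 > 0" unfolding e0_def using S2f aP eta by (subst Min_gr_iff) (auto simp: S2_def)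
  have e0le: "e0 \<le> \<eta> P Q * (measure P {mean P..} * measure Q {..<mean P - \<eta> P Q})" if "P \<in> \<C>" "Q \<in> \<C>" for P Q
    unfolding e0_def using S2f that by (intro Min_le) (auto simp: S2_def)
  show ?thesis
  proof (intro exI[of _ "C_TS * (1 / e0\<^sup>2) * ln (1 / q)"] allI impI)
    fix K :: nat and Pr :: "nat \<Rightarrow> real measure"
    assume K2: "2 \<le> K" and PrC: "\<forall>i<K. Pr i \<in> \<C>"
    have pr: "\<And>k. k \<in> {..<K} \<Longrightarrow> is_prior (Pr k)" using PrC prC by auto
    have ps: "\<And>k. k \<in> {..<K} \<Longrightarrow> prob_space (Pr k)" using pr prior_basic by blast
    interpret M: prob_space "inst_law K Pr" unfolding inst_law_def using ps by (rule prob_space_PiM)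
    define SE where "SE = {integral\<^sup>L (inst_law K Pr) (\<lambda>mu. max (mu i - mu j) 0) | i j.
                        i < K \<and> j < K \<and> i \<noteq> j}"
    have SEf: "finite SE"
    proof -
      have "SE \<subseteq> (\<lambda>(i,j). integral\<^sup>L (inst_law K Pr) (\<lambda>mu. max (mu i - mu j) 0)) ` ({..<K} \<times> {..<K})"
        by (auto simp: SE_def)
      then show ?thesis by (rule finite_subset) auto
    qed
    have "integral\<^sup>L (inst_law K Pr) (\<lambda>mu. max (mu 0 - mu 1) 0) \<in> SE"
      unfolding SE_def by (rule CollectI, rule exI[of _ 0], rule exI[of _ 1]) (use K2 in auto)
    then have SEne: "SE \<noteq> {}" by blast
    have "e0 \<le> x" if "x \<in> SE" for x
    proof -
      obtain i j where ij: "i < K" "j < K" "i \<noteq> j" and x: "x = integral\<^sup>L (inst_law K Pr) (\<lambda>mu. max (mu i - mu j) 0)"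
        using \<open>x \<in> SE\<close> by (auto simp: SE_def)
      have "e0 \<le> \<eta> (Pr i) (Pr j) * (measure (Pr i) {mean (Pr i)..} * measure (Pr j) {..<mean (Pr i) - \<eta> (Pr i) (Pr j)})"
        using e0le PrC ij by auto
      also have "\<dots> \<le> x"
        unfolding x inst_law_def using ij PrC eta[of "Pr i" "Pr j"]
        by (intro L_eps[OF _ _ _ _ pr]) auto
      finally show ?thesis .
    qed
    then have epsge: "e0 \<le> eps_TS K Pr" unfolding eps_TS_def SE_def[symmetric] using SEf SEne by (subst Min_ge_iff) auto
    define SD where "SD = {measure (inst_law K Pr) {mu \<in> space (inst_law K Pr). A_star K mu = i} | i. i < K}"
    have SDf: "finite SD" unfolding SD_def by simp
    have SDne: "SD \<noteq> {}" using K2 unfolding SD_def by (auto intro!: exI[of _ 0])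
    have dge: "q ^ K \<le> x" if "x \<in> SD" for x
    proof -
      obtain i where i: "i < K" and x: "x = measure (inst_law K Pr) {mu \<in> space (inst_law K Pr). A_star K mu = i}"
        using \<open>x \<in> SD\<close> by (auto simp: SD_def)
      define E where "E = PiE {..<K} (\<lambda>k. if k = i then {mean (Pr i)..} else {..<mean (Pr i)})"
      have "q ^ K \<le> measure (inst_law K Pr) E"
      proof -
        have "q ^ card {..<K} \<le> measure (PiM {..<K} Pr) E"
          unfolding E_def
        proof (rule L_delta)
          show "0 \<le> q" using qpos by simp
          show "q \<le> measure (Pr i) {mean (Pr i)..}" using qa PrC i by auto
          fix k assume "k \<in> {..<K}"
          then show "is_prior (Pr k)" using pr by auto
          assume "k \<noteq> i"
          show "q \<le> measure (Pr k) {..<mean (Pr i)}" using qb PrC i \<open>k \<in> {..<K}\<close> by auto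
        qed (use i in auto)
        then show ?thesis by (simp add: inst_law_def)
      qed
      also have "\<dots> \<le> x"
      proof -
        have seteq: "{mu \<in> space (inst_law K Pr). A_star K mu = i}
           = {mu \<in> space (inst_law K Pr). (\<forall>j\<in>{..<K}. mu j \<le> mu i) \<and> (\<forall>j\<in>{..<i}. mu j < mu i)}"
          using A_star_iff[OF i] by auto
        have mm[measurable]: "(\<lambda>mu. mu j) \<in> borel_measurable (inst_law K Pr)" if "j \<in> {..<K}" for j
          unfolding inst_law_def using pim_prior_meas[OF pr that] .
        have "{mu \<in> space (inst_law K Pr). (\<forall>j\<in>{..<K}. mu j \<le> mu i) \<and> (\<forall>j\<in>{..<i}. mu j < mu i)} \<in> sets (inst_law K Pr)"
        proof (intro sets.sets_Collect_conj sets.sets_Collect_finite_All)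
          fix j assume "j \<in> {..<K}"
          show "{mu \<in> space (inst_law K Pr). mu j \<le> mu i} \<in> sets (inst_law K Pr)"
            using i \<open>j \<in> {..<K}\<close> by (intro borel_measurable_le mm) auto
        next
          fix j assume "j \<in> {..<i}"
          then have "j \<in> {..<K}" using i by auto
          show "{mu \<in> space (inst_law K Pr). mu j < mu i} \<in> sets (inst_law K Pr)"
            using i \<open>j \<in> {..<K}\<close> by (intro borel_measurable_less mm) auto
        qed auto
        moreover have "E \<subseteq> {mu \<in> space (inst_law K Pr). A_star K mu = i}"
        proof
          fix mu assume mu: "mu \<in> E"
          have "mu \<in> space (inst_law K Pr)"
            using mu prior_basic(2)[OF pr] by (auto simp: E_def inst_law_def space_PiM)
          have mi: "mu i \<ge> mean (Pr i)"
            using PiE_mem[OF mu[unfolded E_def], of i] i by auto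
          have mj: "mu j < mu i" if "j < K" "j \<noteq> i" for j
          proof -
            have "mu j < mean (Pr i)" using PiE_mem[OF mu[unfolded E_def], of j] that by auto
            then show ?thesis using mi by linarith
          qed
          have "(\<forall>j<K. mu j \<le> mu i) \<and> (\<forall>j<i. mu j < mu i)"
          proof safe
            fix j assume "j < K" then show "mu j \<le> mu i" using mj[of j] by (cases "j = i") auto
          next
            fix j assume "j < i" then show "mu j < mu i" using mj[of j] i by auto
          qed
          moreover note \<open>mu \<in> space (inst_law K Pr)\<close>
          ultimately show "mu \<in> {mu \<in> space (inst_law K Pr). A_star K mu = i}"
            using A_star_iff[OF i, of mu] by auto
        qed
        ultimately show ?thesis unfolding x seteq by (intro M.finite_measure_mono) auto
      qed
      finally show ?thesis .
    qed
    have dpos: "q ^ K \<le> delta_TS K Pr" unfolding delta_TS_def SD_def[symmetric] using SDf SDne dge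
      by (subst Min_ge_iff) auto
    have dle1: "delta_TS K Pr \<le> 1"
    proof -
      have "delta_TS K Pr \<le> measure (inst_law K Pr) {mu \<in> space (inst_law K Pr). A_star K mu = 0}"
        unfolding delta_TS_def SD_def[symmetric] using SDf K2 by (intro Min_le) (auto simp: SD_def)
      also have "\<dots> \<le> 1" by (rule M.prob_le_1)
      finally show ?thesis .
    qed
    have qK: "q ^ K > 0" using qpos by simp
    have l1: "ln (1 / delta_TS K Pr) \<le> real K * ln (1 / q)"
    proof -
      have "ln (1 / delta_TS K Pr) = - ln (delta_TS K Pr)" using qK dpos by (simp add: ln_div)
      also have "\<dots> \<le> - ln (q ^ K)" using qK dpos by simp
      also have "\<dots> = real K * ln (1 / q)" using qpos by (simp add: ln_realpow ln_div)
      finally show ?thesis .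
    qed
    have l0: "0 \<le> ln (1 / delta_TS K Pr)" using qK dpos dle1 by simp
    have i1: "1 / (eps_TS K Pr)\<^sup>2 \<le> 1 / e0\<^sup>2"
      using e0pos epsge by (intro divide_left_mono power_mono) auto
    have "N_TS C_TS K Pr = C_TS * (1 / (eps_TS K Pr)\<^sup>2) * ln (1 / delta_TS K Pr)" by (simp add: N_TS_def)
    also have "\<dots> \<le> C_TS * (1 / e0\<^sup>2) * (real K * ln (1 / q))"
      using CTS i1 l1 l0 e0pos by (intro mult_mono) auto
    finally show "N_TS C_TS K Pr \<le> C_TS * (1 / e0\<^sup>2) * ln (1 / q) * real K" by (simp add: mult_ac)
  qed
qed

end
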